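(* Let $\psi\in\mathbb C^n$ with $\|\psi\|=1$, $\hbar>0$, $H$ an $n\times n$ Hermitian matrix and $\xi$ an $n\times n$ skew-Hermitian matrix. Then $$[\,i\hbar\xi-H,\ \psi\psi^\dagger\,]=0$$ holds if and only if there exists a skew-Hermitian matrix $\kappa$ such that $$\xi+i\hbar^{-1}H=\{\mathbf 1-2\psi\psi^\dagger,\kappa\}.$$ Moreover, in that case $\xi\psi=-i\hbar^{-1}H\psi-2(\psi^\dagger\kappa\psi)\psi$, where $-2i\hbar\,\psi^\dagger\kappa\psi$ is real; hence if $\psi(t)$ satisfies $\dot\psi=\xi\psi$ with such $\xi(t),\kappa(t)$, then $i\hbar\dot\psi=H\psi+\alpha\psi$ with the real function $\alpha(t)=-2i\hbar\,\psi^\dagger\kappa\psi$.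
   Context: $\{A,B\}=AB+BA$ denotes the anticommutator and $[A,B]=AB-BA$ the commutator; $\mathbf 1$ is the identity matrix. *)

theory Defs
  imports "HOL-Analysis.Analysis"
begin

definition cadj :: "complex^'n^'m \<Rightarrow> complex^'m^'n" where
  "cadj A = (\<chi> i j. cnj (A $ j $ i))"

definition hermitian :: "complex^'n^'n \<Rightarrow> bool" where
  "hermitian A \<longleftrightarrow> cadj A = A"

definition skew_hermitian :: "complex^'n^'n \<Rightarrow> bool" where
  "skew_hermitian A \<longleftrightarrow> cadj A = - A"

definition outer :: "complex^'n \<Rightarrow> complex^'n \<Rightarrow> complex^'n^'n" where
  "outer u v = (\<chi> i j. u $ i * cnj (v $ j))"

definition braket :: "complex^'n \<Rightarrow> complex^'n^'n \<Rightarrow> complex^'n \<Rightarrow> complex" where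
  "braket u A v = (\<Sum>i\<in>UNIV. cnj (u $ i) * ((A *v v) $ i))"

definition cmat_scale :: "complex \<Rightarrow> complex^'n^'m \<Rightarrow> complex^'n^'m" where
  "cmat_scale c A = (\<chi> i j. c * A $ i $ j)"

definition commutator :: "complex^'n^'n \<Rightarrow> complex^'n^'n \<Rightarrow> complex^'n^'n" where
  "commutator A B = A ** B - B ** A"

definition anticommutator :: "complex^'n^'n \<Rightarrow> complex^'n^'n \<Rightarrow> complex^'n^'n" where
  "anticommutator A B = A ** B + B ** A"

end

theory Submission
  imports Defs
begin

lemma mm_rdist: "((A::complex^'n^'m) + B) ** (C::complex^'k^'n) = A ** C + B ** C"
  by (simp add: vec_eq_iff matrix_matrix_mult_def sum.distrib algebra_simps)
lemma mm_ldiff: "(A::complex^'n^'m) ** ((B::complex^'k^'n) - C) = A ** B - A ** C"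
  by (simp add: vec_eq_iff matrix_matrix_mult_def sum_subtractf algebra_simps)
lemma mm_rdiff: "((A::complex^'n^'m) - B) ** (C::complex^'k^'n) = A ** C - B ** C"
  by (simp add: vec_eq_iff matrix_matrix_mult_def sum_subtractf algebra_simps)
lemma mm_lneg: "(-(A::complex^'n^'m)) ** (C::complex^'k^'n) = - (A ** C)"
  by (simp add: vec_eq_iff matrix_matrix_mult_def sum_negf)
lemma mm_rneg: "(A::complex^'n^'m) ** (-(C::complex^'k^'n)) = - (A ** C)"
  by (simp add: vec_eq_iff matrix_matrix_mult_def sum_negf)
lemma cs_ml: "cmat_scale c (A::complex^'n^'m) ** (B::complex^'k^'n) = cmat_scale c (A ** B)"
  by (simp add: vec_eq_iff matrix_matrix_mult_def cmat_scale_def sum_distrib_left algebra_simps)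
lemma cs_mr: "(A::complex^'n^'m) ** cmat_scale c (B::complex^'k^'n) = cmat_scale c (A ** B)"
  by (simp add: vec_eq_iff matrix_matrix_mult_def cmat_scale_def sum_distrib_left algebra_simps)
lemma cs_cs: "cmat_scale a (cmat_scale b A) = cmat_scale (a*b) A"
  by (simp add: vec_eq_iff cmat_scale_def)
lemma cs_add: "cmat_scale c (A + B) = cmat_scale c A + cmat_scale c B"
  by (simp add: vec_eq_iff cmat_scale_def algebra_simps)
lemma cs_diff: "cmat_scale c (A - B) = cmat_scale c A - cmat_scale c B"
  by (simp add: vec_eq_iff cmat_scale_def algebra_simps)
lemma cs_neg: "cmat_scale c (- A) = - cmat_scale c A"
  by (simp add: vec_eq_iff cmat_scale_def algebra_simps)
lemma cs_1[simp]: "cmat_scale 1 A = A"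
  by (simp add: vec_eq_iff cmat_scale_def)
lemma cs_0[simp]: "cmat_scale c 0 = 0"
  by (simp add: vec_eq_iff cmat_scale_def)
lemma cs_sadd: "cmat_scale (a+b) A = cmat_scale a A + cmat_scale b A"
  by (simp add: vec_eq_iff cmat_scale_def algebra_simps)
lemma cs_sdiff: "cmat_scale (a-b) A = cmat_scale a A - cmat_scale b A"
  by (simp add: vec_eq_iff cmat_scale_def algebra_simps)
lemma cs_sneg: "cmat_scale (-a) A = - cmat_scale a A"
  by (simp add: vec_eq_iff cmat_scale_def algebra_simps)
lemma mat1_l[simp]: "mat 1 ** (A::complex^'n^'m) = A" by simp

lemma cadj_mm: "cadj ((A::complex^'n^'m) ** (B::complex^'k^'n)) = cadj B ** cadj A"
  by (simp add: vec_eq_iff matrix_matrix_mult_def cadj_def mult.commute)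
lemma cadj_add: "cadj (A + B) = cadj A + cadj B" by (simp add: vec_eq_iff cadj_def)
lemma cadj_diff: "cadj (A - B) = cadj A - cadj B" by (simp add: vec_eq_iff cadj_def)
lemma cadj_neg: "cadj (- A) = - cadj A" by (simp add: vec_eq_iff cadj_def)
lemma cadj_cs: "cadj (cmat_scale c A) = cmat_scale (cnj c) (cadj A)" by (simp add: vec_eq_iff cadj_def cmat_scale_def)
lemma cadj_mat1: "cadj (mat 1 :: complex^'n^'n) = mat 1" by (simp add: vec_eq_iff cadj_def mat_def)
lemma cadj_outer: "cadj (outer u u) = outer u u" by (simp add: vec_eq_iff cadj_def outer_def mult.commute)

lemma normsum: assumes "norm (psi::complex^'n) = 1"
  shows "(\<Sum>k\<in>UNIV. cnj (psi$k) * psi$k) = 1"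
proof -
  have "(\<Sum>k\<in>UNIV. (norm (psi$k))^2) = 1"
    using assms by (simp add: norm_vec_def L2_set_def)
  hence "complex_of_real (\<Sum>k\<in>UNIV. (norm (psi$k))^2) = 1" by simp
  moreover have "complex_of_real (\<Sum>k\<in>UNIV. (norm (psi$k))^2) = (\<Sum>k\<in>UNIV. cnj (psi$k) * psi$k)"
    unfolding of_real_sum by (rule sum.cong) (simp, metis complex_norm_square mult.commute)
  ultimately show ?thesis by simp
qed

lemma outer_idem: assumes "norm (psi::complex^'n) = 1"
  shows "outer psi psi ** outer psi psi = outer psi psi"
proof -
  have "\<And>i j. (\<Sum>k\<in>UNIV. psi$i * cnj (psi$k) * (psi$k * cnj (psi$j))) = psi$i * cnj (psi$j) * (\<Sum>k\<in>UNIV. cnj (psi$k) * psi$k)"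
    by (simp add: sum_distrib_left algebra_simps)
  thus ?thesis using normsum[OF assms(1)] by (simp add: vec_eq_iff matrix_matrix_mult_def outer_def)
qed

lemma outer_vec: "outer psi psi *v v = (\<Sum>k\<in>UNIV. cnj (psi$k) * v$k) *s psi"
  by (simp add: vec_eq_iff matrix_vector_mult_def outer_def sum_distrib_left algebra_simps)

lemma cs_mv: "cmat_scale c (A::complex^'n^'m) *v v = c *s (A *v v)"
  by (simp add: vec_eq_iff matrix_vector_mult_def cmat_scale_def sum_distrib_left algebra_simps)

lemma cs_zero: assumes "c \<noteq> 0" "cmat_scale c A = 0" shows "A = 0"
  using assms by (simp add: vec_eq_iff cmat_scale_def)

lemma U_vec: "(mat 1 - cmat_scale 2 (outer psi psi)) *v w
     = w - (2 * (\<Sum>k\<in>UNIV. cnj (psi$k) * w$k)) *s psi"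
  by (simp add: matrix_vector_mult_diff_rdistrib cs_mv outer_vec vec_eq_iff)

lemma UU: assumes "norm (psi::complex^'n) = 1"
  shows "(mat 1 - cmat_scale 2 (outer psi psi)) ** (mat 1 - cmat_scale 2 (outer psi psi)) = mat 1"
  by (simp add: mm_ldiff mm_rdiff cs_ml cs_mr cs_cs outer_idem[OF assms]) (simp add: vec_eq_iff cmat_scale_def)

lemma braket_skew: assumes "skew_hermitian K"
  shows "cnj (braket psi K psi) = - braket psi K psi"
proof -
  have K: "\<And>i j. cnj (K$i$j) = - K$j$i"
  proof -
    fix i j
    have "cadj K $ j $ i = (- K) $ j $ i" using assms by (simp add: skew_hermitian_def)
    thus "cnj (K$i$j) = - K$j$i" by (simp add: cadj_def)
  qed
  have "cnj (braket psi K psi) = (\<Sum>i\<in>UNIV. \<Sum>j\<in>UNIV. psi$i * (cnj (K$i$j) * cnj (psi$j)))"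
    by (simp add: braket_def matrix_vector_mult_def sum_distrib_left)
  also have "\<dots> = (\<Sum>i\<in>UNIV. \<Sum>j\<in>UNIV. - (cnj (psi$j) * (K$j$i * psi$i)))"
    by (simp add: K algebra_simps)
  also have "\<dots> = (\<Sum>j\<in>UNIV. \<Sum>i\<in>UNIV. - (cnj (psi$j) * (K$j$i * psi$i)))"
    by (rule sum.swap)
  also have "\<dots> = - braket psi K psi"
    by (simp add: braket_def matrix_vector_mult_def sum_distrib_left sum_negf)
  finally show ?thesis .
qed

lemma real_part: assumes "skew_hermitian K" "hbar \<in> \<real>"
  shows "- 2 * \<i> * hbar * braket psi K psi \<in> \<real>"
proof -
  have "Re (braket psi K psi) = 0"
    using arg_cong[OF braket_skew[OF assms(1), of psi], of Re] by simp
  moreover have "Im hbar = 0" using assms(2) by (simp add: complex_is_Real_iff)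
  ultimately show ?thesis by (simp add: complex_is_Real_iff)
qed

lemma part2: assumes "norm (psi::complex^'n) = 1"
  and eq: "xi + cmat_scale c H = anticommutator (mat 1 - cmat_scale 2 (outer psi psi)) K"
  shows "xi *v psi = - (c *s (H *v psi)) - (2 * braket psi K psi) *s psi"
proof -
  let ?U = "mat 1 - cmat_scale 2 (outer psi psi)"
  have xi: "xi = anticommutator ?U K - cmat_scale c H" using eq by (simp add: algebra_simps)
  have Up: "?U *v psi = - psi"
    using normsum[OF assms(1)] by (simp add: U_vec vec_eq_iff)
  have "xi *v psi = ?U *v (K *v psi) + K *v (?U *v psi) - c *s (H *v psi)"
    by (simp only: xi anticommutator_def matrix_vector_mult_diff_rdistrib matrix_vector_mult_add_rdistrib
          matrix_vector_mul_assoc[symmetric] cs_mv)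
  also have "\<dots> = - (c *s (H *v psi)) - (2 * braket psi K psi) *s psi"
    unfolding Up unfolding U_vec braket_def by (simp add: vec_eq_iff matrix_vector_mult_def sum_negf algebra_simps)
  finally show ?thesis .
qed

lemma part1:
  fixes psi :: "complex^'n" and hbar :: real and H xi :: "complex^'n^'n"
  assumes n: "norm psi = 1" and hb: "hbar > 0" and "hermitian H" and "skew_hermitian xi"
  shows "commutator (cmat_scale (\<i> * of_real hbar) xi - H) (outer psi psi) = 0
      \<longleftrightarrow> (\<exists>\<kappa>. skew_hermitian \<kappa> \<and>
             xi + cmat_scale (\<i> / of_real hbar) H
               = anticommutator (mat 1 - cmat_scale 2 (outer psi psi)) \<kappa>)"
proof -
  define P where "P = outer psi psi"
  define U where "U = mat 1 - cmat_scale 2 P"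
  define M where "M = xi + cmat_scale (\<i> / of_real hbar) H"
  have hb0: "complex_of_real hbar \<noteq> 0" using hb by simp
  have AM: "cmat_scale (\<i> * of_real hbar) xi - H = cmat_scale (\<i> * of_real hbar) M"
    using hb0 by (simp add: M_def vec_eq_iff cmat_scale_def field_simps)
  have UU': "U ** U = mat 1" unfolding U_def P_def using UU[OF n] .
  have cU: "cadj U = U" by (simp add: U_def P_def cadj_diff cadj_cs cadj_mat1 cadj_outer)
  have cH: "cadj H = H" using assms(3) by (simp add: hermitian_def)
  have cxi: "cadj xi = - xi" using assms(4) by (simp add: skew_hermitian_def)
  have cc: "cnj (\<i> / complex_of_real hbar) = - (\<i> / complex_of_real hbar)" by simp
  have cM: "cadj M = - M"
    unfolding M_def cadj_add cadj_cs cH cxi cc cs_sneg by simp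
  have MU: "M ** U = M - cmat_scale 2 (M ** P)" by (simp add: U_def mm_ldiff cs_mr)
  have UM: "U ** M = M - cmat_scale 2 (P ** M)" by (simp add: U_def mm_rdiff cs_ml)
  have "commutator (cmat_scale (\<i> * of_real hbar) xi - H) P = 0 \<longleftrightarrow> commutator M P = 0"
  proof
    assume "commutator (cmat_scale (\<i> * of_real hbar) xi - H) P = 0"
    hence "cmat_scale (\<i> * of_real hbar) (commutator M P) = 0"
      by (simp add: AM commutator_def cs_ml cs_mr cs_diff)
    thus "commutator M P = 0" by (rule cs_zero[rotated]) (use hb0 in simp)
  qed (simp add: AM commutator_def cs_ml cs_mr cs_diff[symmetric])
  also have "\<dots> \<longleftrightarrow> M ** U = U ** M"
  proof
    assume "commutator M P = 0"
    thus "M ** U = U ** M" by (simp add: MU UM commutator_def)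
  next
    assume "M ** U = U ** M"
    hence "cmat_scale 2 (M ** P) = cmat_scale 2 (P ** M)" by (simp add: MU UM)
    hence "cmat_scale 2 (M ** P - P ** M) = 0" by (simp add: cs_diff)
    thus "commutator M P = 0" unfolding commutator_def by (rule cs_zero[rotated]) simp
  qed
  also have "\<dots> \<longleftrightarrow> (\<exists>\<kappa>. skew_hermitian \<kappa> \<and> M = anticommutator U \<kappa>)"
  proof
    assume c: "M ** U = U ** M"
    define k where "k = cmat_scale (1/2) (U ** M)"
    have "skew_hermitian k"
      by (simp add: skew_hermitian_def k_def cadj_cs cadj_mm cU cM mm_lneg c cs_neg)
    moreover have "M = anticommutator U k"
    proof -
      have "anticommutator U k = cmat_scale (1/2) ((U ** U) ** M) + cmat_scale (1/2) (U ** (M ** U))"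
        by (simp add: anticommutator_def k_def cs_ml cs_mr matrix_mul_assoc)
      also have "\<dots> = M" by (simp add: c matrix_mul_assoc UU' cs_sadd[symmetric])
      finally show ?thesis by simp
    qed
    ultimately show "\<exists>\<kappa>. skew_hermitian \<kappa> \<and> M = anticommutator U \<kappa>" by blast
  next
    assume "\<exists>\<kappa>. skew_hermitian \<kappa> \<and> M = anticommutator U \<kappa>"
    then obtain k where k: "M = anticommutator U k" by blast
    have "U ** M = (U ** U) ** k + U ** k ** U"
      by (simp add: k anticommutator_def matrix_add_ldistrib matrix_mul_assoc)
    moreover have "M ** U = U ** k ** U + k ** (U ** U)"
      by (simp add: k anticommutator_def mm_rdist matrix_mul_assoc)
    ultimately show "M ** U = U ** M" by (simp add: UU' add.commute)
  qed
  finally show ?thesis by (simp add: P_def U_def M_def)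
qed

theorem mainTheorem3:
  fixes psi :: "complex^'n" and hbar :: real and H xi :: "complex^'n^'n"
  assumes "norm psi = 1" and "hbar > 0" and "hermitian H" and "skew_hermitian xi"
  shows
   "(commutator (cmat_scale (\<i> * of_real hbar) xi - H) (outer psi psi) = 0
      \<longleftrightarrow> (\<exists>\<kappa>. skew_hermitian \<kappa> \<and>
             xi + cmat_scale (\<i> / of_real hbar) H
               = anticommutator (mat 1 - cmat_scale 2 (outer psi psi)) \<kappa>))
    \<and> (\<forall>\<kappa>. skew_hermitian \<kappa> \<and>
           xi + cmat_scale (\<i> / of_real hbar) H
             = anticommutator (mat 1 - cmat_scale 2 (outer psi psi)) \<kappa>
         \<longrightarrow> xi *v psi = - ((\<i> / of_real hbar) *s (H *v psi))
                             - (2 * braket psi \<kappa> psi) *s psi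
           \<and> - 2 * \<i> * of_real hbar * braket psi \<kappa> psi \<in> \<real>)
    \<and> (\<forall>(Psi :: real \<Rightarrow> complex^'n) Xi K.
         (\<forall>t. norm (Psi t) = 1 \<and> skew_hermitian (Xi t) \<and> skew_hermitian (K t)
              \<and> Xi t + cmat_scale (\<i> / of_real hbar) H
                  = anticommutator (mat 1 - cmat_scale 2 (outer (Psi t) (Psi t))) (K t)
              \<and> (Psi has_vector_derivative (Xi t *v Psi t)) (at t))
         \<longrightarrow> (\<forall>t. - 2 * \<i> * of_real hbar * braket (Psi t) (K t) (Psi t) \<in> \<real>
                 \<and> (\<i> * of_real hbar) *s vector_derivative Psi (at t)
                     = H *v Psi t
                       + (- 2 * \<i> * of_real hbar * braket (Psi t) (K t) (Psi t)) *s Psi t))"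
proof (intro conjI allI impI)
  show "commutator (cmat_scale (\<i> * of_real hbar) xi - H) (outer psi psi) = 0
      \<longleftrightarrow> (\<exists>\<kappa>. skew_hermitian \<kappa> \<and>
             xi + cmat_scale (\<i> / of_real hbar) H
               = anticommutator (mat 1 - cmat_scale 2 (outer psi psi)) \<kappa>)"
    by (rule part1[OF assms])
next
  fix \<kappa> assume h: "skew_hermitian \<kappa> \<and> xi + cmat_scale (\<i> / of_real hbar) H
             = anticommutator (mat 1 - cmat_scale 2 (outer psi psi)) \<kappa>"
  show "xi *v psi = - ((\<i> / of_real hbar) *s (H *v psi)) - (2 * braket psi \<kappa> psi) *s psi"
    using part2[OF assms(1)] h by blast
  show "- 2 * \<i> * of_real hbar * braket psi \<kappa> psi \<in> \<real>"
    using real_part[of \<kappa> "of_real hbar" psi] h by simp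
next
  fix Psi :: "real \<Rightarrow> complex^'n" and Xi K t
  assume h: "\<forall>t. norm (Psi t) = 1 \<and> skew_hermitian (Xi t) \<and> skew_hermitian (K t)
              \<and> Xi t + cmat_scale (\<i> / of_real hbar) H
                  = anticommutator (mat 1 - cmat_scale 2 (outer (Psi t) (Psi t))) (K t)
              \<and> (Psi has_vector_derivative (Xi t *v Psi t)) (at t)"
  hence ht: "norm (Psi t) = 1" "skew_hermitian (K t)"
    "Xi t + cmat_scale (\<i> / of_real hbar) H
                  = anticommutator (mat 1 - cmat_scale 2 (outer (Psi t) (Psi t))) (K t)"
    "(Psi has_vector_derivative (Xi t *v Psi t)) (at t)" by auto
  show "- 2 * \<i> * of_real hbar * braket (Psi t) (K t) (Psi t) \<in> \<real>"
    using real_part[OF ht(2), of "of_real hbar" "Psi t"] by simp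
  have vd: "vector_derivative Psi (at t) = Xi t *v Psi t"
    using ht(4) by (rule vector_derivative_at)
  have e: "Xi t *v Psi t = - ((\<i> / of_real hbar) *s (H *v Psi t)) - (2 * braket (Psi t) (K t) (Psi t)) *s Psi t"
    by (rule part2[OF ht(1) ht(3)])
  have hb0: "complex_of_real hbar \<noteq> 0" using assms(2) by simp
  show "(\<i> * of_real hbar) *s vector_derivative Psi (at t)
                     = H *v Psi t
                       + (- 2 * \<i> * of_real hbar * braket (Psi t) (K t) (Psi t)) *s Psi t"
    unfolding vd e using hb0 by (simp add: vec_eq_iff field_simps)
qed

end
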